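(* Let $G$ be a finite, simple, connected $(n-3)$-regular graph of order $n\ge 5$. Then $\gamma_P(G)=1$ if and only if there exists an edge $uv\in E(G)$ such that $|N[v]\setminus N[u]|=1$.
   Context: For $U\subseteq V(G)$, $cl(U)$ is obtained by coloring $U$ black and repeatedly applying: if a black vertex has exactly one white neighbor, that neighbor becomes black. $S$ is a power dominating set if $cl(N[S])=V(G)$; $\gamma_P(G)$ is the minimum size of a power dominating set. *)

theory Defs
  imports Main
begin

definition simple_graph :: "'a set \<Rightarrow> ('a \<Rightarrow> 'a \<Rightarrow> bool) \<Rightarrow> bool" where
  "simple_graph V E \<longleftrightarrow> finite V \<and> (\<forall>u v. E u v \<longrightarrow> u \<in> V \<and> v \<in> V) \<and>
     (\<forall>u v. E u v \<longrightarrow> E v u) \<and> (\<forall>v. \<not> E v v)"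

definition connected_graph :: "'a set \<Rightarrow> ('a \<Rightarrow> 'a \<Rightarrow> bool) \<Rightarrow> bool" where
  "connected_graph V E \<longleftrightarrow> (\<forall>u\<in>V. \<forall>v\<in>V. E\<^sup>*\<^sup>* u v)"

definition nbh :: "'a set \<Rightarrow> ('a \<Rightarrow> 'a \<Rightarrow> bool) \<Rightarrow> 'a \<Rightarrow> 'a set" where
  "nbh V E v = {u \<in> V. E v u}"

definition cnbh :: "'a set \<Rightarrow> ('a \<Rightarrow> 'a \<Rightarrow> bool) \<Rightarrow> 'a \<Rightarrow> 'a set" where
  "cnbh V E v = insert v (nbh V E v)"

definition cnbh_set :: "'a set \<Rightarrow> ('a \<Rightarrow> 'a \<Rightarrow> bool) \<Rightarrow> 'a set \<Rightarrow> 'a set" where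
  "cnbh_set V E S = (\<Union>v\<in>S. cnbh V E v)"

definition regular :: "'a set \<Rightarrow> ('a \<Rightarrow> 'a \<Rightarrow> bool) \<Rightarrow> nat \<Rightarrow> bool" where
  "regular V E k \<longleftrightarrow> (\<forall>v\<in>V. card (nbh V E v) = k)"

(* cl(U): colour U black; repeatedly, if a black vertex v has exactly one white
   neighbour w, colour w black.  Defined as the least set containing U closed
   under this propagation rule. *)
inductive_set cl :: "'a set \<Rightarrow> ('a \<Rightarrow> 'a \<Rightarrow> bool) \<Rightarrow> 'a set \<Rightarrow> 'a set"
  for V :: "'a set" and E :: "'a \<Rightarrow> 'a \<Rightarrow> bool" and U :: "'a set" where
  base: "u \<in> U \<Longrightarrow> u \<in> cl V E U"
| force: "\<lbrakk> v \<in> cl V E U; w \<in> nbh V E v; \<forall>x\<in>nbh V E v. x \<noteq> w \<longrightarrow> x \<in> cl V E U \<rbrakk>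
           \<Longrightarrow> w \<in> cl V E U"

definition power_dominating :: "'a set \<Rightarrow> ('a \<Rightarrow> 'a \<Rightarrow> bool) \<Rightarrow> 'a set \<Rightarrow> bool" where
  "power_dominating V E S \<longleftrightarrow> S \<subseteq> V \<and> cl V E (cnbh_set V E S) = V"

definition power_domination_number :: "'a set \<Rightarrow> ('a \<Rightarrow> 'a \<Rightarrow> bool) \<Rightarrow> nat" where
  "power_domination_number V E = (LEAST k. \<exists>S. power_dominating V E S \<and> card S = k)"

end

theory Submission
  imports Defs
begin

lemma cl_sub0: "x \<in> cl V E U \<Longrightarrow> U \<subseteq> V \<Longrightarrow> x \<in> V"
proof (induction rule: cl.induct)
  case (base u) then show ?case by blast
next
  case (force v w) then show ?case unfolding nbh_def by blast
qed

lemma cl_sub: "simple_graph V E \<Longrightarrow> U \<subseteq> V \<Longrightarrow> cl V E U \<subseteq> V"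
proof
  fix x assume "U \<subseteq> V" "x \<in> cl V E U"
  then show "x \<in> V" using cl_sub0 by metis
qed

lemma cl_emp0: "x \<in> cl V E U \<Longrightarrow> U = {} \<Longrightarrow> False"
  by (induction rule: cl.induct) auto

lemma natarith1: "(a::nat) = c - 3 \<Longrightarrow> 5 \<le> c \<Longrightarrow> Suc a = c - 2" by linarith
lemma natarith2: "(b::nat) = c - 2 \<Longrightarrow> d = c - b \<Longrightarrow> 5 \<le> c \<Longrightarrow> d = 2" by linarith

lemma W2:
  assumes sg: "simple_graph V E" and n: "card V \<ge> 5" and r: "regular V E (card V - 3)"
    and v: "v \<in> V"
  shows "card (V - cnbh V E v) = 2"
proof -
  have fin: "finite V" using sg unfolding simple_graph_def by blast
  have nv: "v \<notin> nbh V E v" using sg unfolding simple_graph_def nbh_def by blast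
  have sub: "cnbh V E v \<subseteq> V" using v unfolding cnbh_def nbh_def by blast
  have c3: "card (nbh V E v) = card V - 3" using r v unfolding regular_def by blast
  have fn: "finite (nbh V E v)" using fin unfolding nbh_def by simp
  have "card (cnbh V E v) = Suc (card (nbh V E v))"
    unfolding cnbh_def using fn nv by (rule card_insert_disjoint)
  then have c2: "card (cnbh V E v) = card V - 2" using natarith1[OF c3 n] by simp
  have "card (V - cnbh V E v) = card V - card (cnbh V E v)"
    by (rule card_Diff_subset[OF finite_subset[OF sub fin] sub])
  then show ?thesis by (rule natarith2[OF c2 _ n])
qed

theorem mainTheorem8:
  fixes V :: "'a set" and E :: "'a \<Rightarrow> 'a \<Rightarrow> bool"
  assumes "simple_graph V E"
    and "connected_graph V E"
    and "card V \<ge> 5"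
    and "regular V E (card V - 3)"
  shows "power_domination_number V E = 1 \<longleftrightarrow>
         (\<exists>u v. E u v \<and> card (cnbh V E v - cnbh V E u) = 1)"
proof -
  note sg = assms(1) and n = assms(3) and r = assms(4)
  have fin: "finite V" using sg by (simp add: simple_graph_def)
  have Ein: "\<And>a b. E a b \<Longrightarrow> a \<in> V \<and> b \<in> V" using sg by (simp add: simple_graph_def)
  have Esym: "\<And>a b. E a b \<Longrightarrow> E b a" using sg by (simp add: simple_graph_def)
  have Eirr: "\<And>a. \<not> E a a" using sg by (simp add: simple_graph_def)
  have Vne: "V \<noteq> {}" using n by auto
  have cl_empty: "cl V E {} = {}"
  proof (rule equals0I)
    fix x assume "x \<in> cl V E {}"
    then show False by (rule cl_emp0) (rule refl)
  qed
  have not0: "\<not> power_dominating V E S" if "card S = 0" for S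
  proof
    assume pd: "power_dominating V E S"
    then have "S \<subseteq> V" by (simp add: power_dominating_def)
    then have "S = {}" using that fin by (meson card_0_eq finite_subset)
    then show False using pd cl_empty Vne by (simp add: power_dominating_def cnbh_set_def)
  qed
  have pd_single: "power_dominating V E {u} \<longleftrightarrow> u \<in> V \<and> cl V E (cnbh V E u) = V" for u
    by (simp add: power_dominating_def cnbh_set_def)
  show ?thesis
  proof
    assume h: "power_domination_number V E = 1"
    have exV: "\<exists>k S. power_dominating V E S \<and> card S = k"
    proof -
      have "cnbh_set V E V = V" by (auto simp: cnbh_set_def cnbh_def nbh_def)
      moreover have "cl V E V = V"
      proof
        show "cl V E V \<subseteq> V" using cl_sub[OF sg] by simp
        show "V \<subseteq> cl V E V" by (auto intro: cl.base)
      qed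
      ultimately have "power_dominating V E V" by (simp add: power_dominating_def)
      then show ?thesis by blast
    qed
    have hl: "(LEAST k. \<exists>S. power_dominating V E S \<and> card S = k) = 1"
      using h unfolding power_domination_number_def .
    have "\<exists>S. power_dominating V E S \<and> card S = 1"
      using LeastI_ex[OF exV] unfolding hl .
    then obtain S where pS: "power_dominating V E S" and cS: "card S = 1" by blast
    from cS obtain v where "S = {v}" by (auto simp add: card_1_singleton_iff)
    with pS have pv: "power_dominating V E {v}" by simp
    then have v: "v \<in> V" and clv: "cl V E (cnbh V E v) = V" using pd_single by auto
    show "\<exists>u v. E u v \<and> card (cnbh V E v - cnbh V E u) = 1"
    proof (rule ccontr)
      assume nex: "\<not> ?thesis"
      have "x \<in> cnbh V E v" if "x \<in> cl V E (cnbh V E v)" for x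
        using that
      proof (induction rule: cl.induct)
        case (base u) then show ?case .
      next
        case (force v' w)
        show ?case
        proof (rule ccontr)
          assume wn: "w \<notin> cnbh V E v"
          have wV: "w \<in> V" using force.hyps(2) by (simp add: nbh_def)
          have "v' \<noteq> v" using force.hyps(2) wn by (auto simp: cnbh_def)
          then have evv: "E v v'" using force.IH(1) by (simp add: cnbh_def nbh_def)
          then have v'V: "v' \<in> V" using Ein by blast
          have "cnbh V E v' - cnbh V E v = {w}"
          proof
            show "{w} \<subseteq> cnbh V E v' - cnbh V E v" using force.hyps(2) wn by (auto simp: cnbh_def)
          next
            show "cnbh V E v' - cnbh V E v \<subseteq> {w}"
            proof
              fix y assume y: "y \<in> cnbh V E v' - cnbh V E v"
              have "y \<noteq> v'" using y force.IH(1) by auto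
              then have "y \<in> nbh V E v'" using y by (simp add: cnbh_def)
              then show "y \<in> {w}" using force.IH y by auto
            qed
          qed
          then have "card (cnbh V E v' - cnbh V E v) = 1" by simp
          then show False using nex evv by blast
        qed
      qed
      then have "V - cnbh V E v = {}" using clv by auto
      moreover have "card (V - cnbh V E v) = 2" using W2[OF sg n r v] .
      ultimately have "card ({}::'a set) = 2" by (simp only:)
      then show False by simp
    qed
  next
    assume "\<exists>u v. E u v \<and> card (cnbh V E v - cnbh V E u) = 1"
    then obtain u v where euv: "E u v" and c1: "card (cnbh V E v - cnbh V E u) = 1"
      by blast
    from c1 obtain x where D: "cnbh V E v - cnbh V E u = {x}"
      by (auto simp add: card_1_singleton_iff)
    have uV: "u \<in> V" and vV: "v \<in> V" using Ein[OF euv] by auto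
    let ?C = "cl V E (cnbh V E u)"
    have base: "y \<in> ?C" if "y \<in> cnbh V E u" for y using that by (rule cl.base)
    have vC: "v \<in> ?C" using base euv vV by (simp add: cnbh_def nbh_def)
    have xv: "x \<noteq> v" using D euv vV by (auto simp: cnbh_def nbh_def)
    have xn: "x \<in> nbh V E v" using D xv by (auto simp: cnbh_def)
    have xC: "x \<in> ?C"
    proof (rule cl.force[OF vC xn], intro ballI impI)
      fix z assume "z \<in> nbh V E v" "z \<noteq> x"
      then have "z \<in> cnbh V E u" using D by (auto simp: cnbh_def)
      then show "z \<in> ?C" by (rule base)
    qed
    have card2: "card (V - cnbh V E u) = 2" using W2[OF sg n r uV] .
    then obtain a b where ab: "V - cnbh V E u = {a, b}" "a \<noteq> b"
      using card_2_iff by metis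
    have xV: "x \<in> V" using xn by (simp add: nbh_def)
    have xW: "x \<in> V - cnbh V E u" using D xV by auto
    have allC: "z \<in> ?C" if zV: "z \<in> V" for z
    proof (cases "z \<in> cnbh V E u \<or> z = x")
      case True then show ?thesis using base xC by auto
    next
      case False
      then have zW: "z \<in> V - cnbh V E u" using zV by auto
      have W: "V - cnbh V E u = {x, z}" using ab xW zW False by auto
      have "card (nbh V E z) = card V - 3" using r zV by (simp add: regular_def)
      then have "nbh V E z \<noteq> {}" using n by auto
      then obtain w where wz: "w \<in> nbh V E z" by auto
      have ezw: "E z w" and wV: "w \<in> V" using wz by (auto simp: nbh_def)
      have wnz: "w \<noteq> z" using ezw Eirr by auto
      have inC: "y \<in> ?C" if "y \<in> V" "y \<noteq> z" for y
      proof (cases "y \<in> cnbh V E u")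
        case True then show ?thesis by (rule base)
      next
        case False then have "y = x" using W that by auto
        then show ?thesis using xC by simp
      qed
      have zn: "z \<in> nbh V E w" using Esym[OF ezw] zV by (simp add: nbh_def)
      show ?thesis
      proof (rule cl.force[OF inC[OF wV wnz] zn], intro ballI impI)
        fix y assume "y \<in> nbh V E w" "y \<noteq> z"
        then show "y \<in> ?C" using inC by (simp add: nbh_def)
      qed
    qed
    have "cnbh V E u \<subseteq> V" using uV by (auto simp: cnbh_def nbh_def)
    then have "cl V E (cnbh V E u) \<subseteq> V" by (rule cl_sub[OF sg])
    then have "cl V E (cnbh V E u) = V"
      using allC by blast
    then have pdu: "power_dominating V E {u}" using pd_single uV by simp
    show "power_domination_number V E = 1"
      unfolding power_domination_number_def
    proof (rule Least_equality)
      show "\<exists>S. power_dominating V E S \<and> card S = 1" using pdu by (intro exI[of _ "{u}"]) simp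
    next
      fix k assume "\<exists>S. power_dominating V E S \<and> card S = k"
      then show "1 \<le> k" using not0 by (cases k) auto
    qed
  qed
qed

end
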